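(* Let $\mathcal T$ be a trie with $n$ nodes over an alphabet $\Sigma$ of size $\sigma$ and let $k\ge0$ be an integer. Then it is possible to represent $\mathcal T$ (i.e., encode it so that it can be uniquely reconstructed) in a number of bits upper-bounded by $n\mathcal H_k(\mathcal T)+2+(\sigma+1)\sigma^k\lceil\log n\rceil$.
   Context: A trie over a finite totally ordered alphabet $\Sigma$ is a rooted ordered tree with edges labeled by symbols of $\Sigma$ such that edges leaving the same node have distinct labels and siblings are ordered by their incoming labels. For a node $u$, $out(u)$ is the set of labels of edges leaving $u$; $\lambda(u)$ is the label of the edge entering $u$, with $\lambda(\text{root})=\#$, a new symbol not in $\Sigma$; $\pi(u)$ is the parent of $u$, with $\pi(\text{root})=\text{root}$. The $k$-th order context is $\lambda_0(u)=\epsilon$ and $\lambda_k(u)=\lambda_{k-1}(\pi(u))\cdot\lambda(u)$ (so it consists of the last $k$ labels on the root-to-$u$ path, left-padded with $\#$ if the depth of $u$ is less than $k$). For a length-$k$ string $w$ and $c\in\Sigma$, $n_w=|\{u:\lambda_k(u)=w\}|$ and $n_{w,c}=|\{u:\lambda_k(u)=w,\ c\in out(u)\}|$. Logarithms are base 2 and $0\log(x/0)=0$. The $k$-th order empirical entropy is $\mathcal H_k(\mathcal T)=\sum_{w}\sum_{c\in\Sigma}\left[\frac{n_{w,c}}{n}\log\frac{n_w}{n_{w,c}}+\frac{n_w-n_{w,c}}{n}\log\frac{n_w}{n_w-n_{w,c}}\right]$, the outer sum ranging over all length-$k$ contexts $w$ with $n_w>0$. *)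

theory Defs
  imports Complex_Main
begin

text \<open>A trie over the alphabet Alph is represented by its set of nodes, each node being
  identified with the string of edge labels on the root-to-node path. Since sibling edges carry
  distinct labels and are ordered by their labels, this set determines the ordered labelled tree.\<close>

definition is_trie :: "'a set \<Rightarrow> 'a list set \<Rightarrow> bool" where
  "is_trie Alph T \<longleftrightarrow> finite T \<and> [] \<in> T \<and> T \<subseteq> lists Alph \<and>
     (\<forall>u c. u @ [c] \<in> T \<longrightarrow> u \<in> T)"

definition tparent :: "'a list \<Rightarrow> 'a list" where
  "tparent u = butlast u"

text \<open>incoming label lambda(u); None plays the role of the fresh symbol # (lambda(root) = #)\<close>
definition tlabel :: "'a list \<Rightarrow> 'a option" where
  "tlabel u = (if u = [] then None else Some (last u))"

fun tctx :: "nat \<Rightarrow> 'a list \<Rightarrow> 'a option list" where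
  "tctx 0 u = []"
| "tctx (Suc k) u = tctx k (tparent u) @ [tlabel u]"

definition tout :: "'a list set \<Rightarrow> 'a list \<Rightarrow> 'a set" where
  "tout T u = {c. u @ [c] \<in> T}"

definition n_ctx :: "'a list set \<Rightarrow> nat \<Rightarrow> 'a option list \<Rightarrow> nat" where
  "n_ctx T k w = card {u \<in> T. tctx k u = w}"

definition n_ctx_sym :: "'a list set \<Rightarrow> nat \<Rightarrow> 'a option list \<Rightarrow> 'a \<Rightarrow> nat" where
  "n_ctx_sym T k w c = card {u \<in> T. tctx k u = w \<and> c \<in> tout T u}"

definition xlog :: "real \<Rightarrow> real \<Rightarrow> real" where
  "xlog x y = (if x = 0 then 0 else x * log 2 (y / x))"

text \<open>k-th order empirical entropy H_k(T); n = number of nodes; the outer sum ranges over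
  the length-k contexts w with n_w > 0, i.e. the contexts of nodes of T.\<close>
definition trie_entropy :: "'a set \<Rightarrow> nat \<Rightarrow> 'a list set \<Rightarrow> real" where
  "trie_entropy Alph k T =
     (\<Sum>w \<in> tctx k ` T. \<Sum>c \<in> Alph.
        xlog (real (n_ctx_sym T k w c)) (real (n_ctx T k w)) / real (card T)
      + xlog (real (n_ctx T k w) - real (n_ctx_sym T k w c)) (real (n_ctx T k w)) / real (card T))"

end

theory Submission
  imports Defs "HOL-Library.List_Lexorder" "HOL-Library.FuncSet"
begin


lemma card_fibers:
  assumes "finite A" "finite I" "f ` A \<subseteq> I"
  shows "card A = (\<Sum>i\<in>I. card {a\<in>A. f a = i})"
  using sum.group[OF assms, of "\<lambda>_. 1::nat"] by simp

lemma tctx_formula: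
  "tctx k u = replicate (k - length u) None @ map Some (drop (length u - k) u)"
proof (induction k arbitrary: u)
  case 0 then show ?case by simp
next
  case (Suc k)
  show ?case
  proof (cases u rule: rev_exhaust)
    case Nil then show ?thesis using Suc by (simp add: tparent_def tlabel_def replicate_append_same)
  next
    case (snoc p c)
    have "length p - k \<le> length p" by simp
    then show ?thesis using Suc by (simp add: snoc tparent_def tlabel_def Suc_diff_le)
  qed
qed

lemma tctx_length[simp]: "length (tctx k u) = k"
  by (simp add: tctx_formula)

lemma tctx_snoc: "tctx (Suc k) (p @ [c]) = tctx k p @ [Some c]"
  by (simp add: tparent_def tlabel_def)

lemma tctx_tl: "tctx k p = tl (tctx (Suc k) p)"
proof (cases "length p \<le> k")
  case True then show ?thesis by (auto simp: tctx_formula Suc_diff_le)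
next
  case False
  then have e: "length p - k = Suc (length p - Suc k)" by simp
  have "drop (length p - k) p = tl (drop (length p - Suc k) p)"
    unfolding e by (simp add: drop_Suc tl_drop)
  then show ?thesis using False by (simp add: tctx_formula map_tl)
qed

lemma tctx_Cons: "tctx (Suc k) p = hd (tctx (Suc k) p) # tctx k p"
  using tctx_length[of "Suc k" p] tctx_tl[of k p] by (cases "tctx (Suc k) p") auto

lemma tctx_set: "u \<in> lists Alph \<Longrightarrow> set (tctx k u) \<subseteq> insert None (Some ` Alph)"
  by (auto simp: tctx_formula dest: in_set_dropD)

lemma tctx_full: "length u \<ge> k \<Longrightarrow> tctx k u = map Some (drop (length u - k) u)"
  by (simp add: tctx_formula)

lemma tctx_short: "length u < k \<Longrightarrow> None \<in> set (tctx k u)"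
  by (simp add: tctx_formula)

lemma code_exists:
  fixes B :: "'b \<Rightarrow> real"
  assumes "finite X"
    and "\<forall>T\<in>X. B T \<ge> 0 \<and> card {S\<in>X. B S \<le> B T} \<le> 2 ^ nat \<lfloor>B T\<rfloor>"
  shows "\<exists>E :: 'b \<Rightarrow> bool list. inj_on E X \<and> (\<forall>T\<in>X. real (length (E T)) \<le> B T)"
  using assms
proof (induction X rule: finite_remove_induct)
  case empty then show ?case by simp
next
  case (remove A)
  have mx: "Max (B ` A) \<in> B ` A" using remove.hyps(1,2) by (intro Max_in) auto
  then obtain T0 where T0a: "T0 \<in> A" "B T0 = Max (B ` A)" by auto
  have T0: "T0 \<in> A" "\<forall>S\<in>A. B S \<le> B T0"
    using T0a remove.hyps(1) by auto
  have hyp: "\<forall>T\<in>A - {T0}. B T \<ge> 0 \<and> card {S\<in>A - {T0}. B S \<le> B T} \<le> 2 ^ nat \<lfloor>B T\<rfloor>"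
  proof
    fix T assume T: "T \<in> A - {T0}"
    have "card {S\<in>A - {T0}. B S \<le> B T} \<le> card {S\<in>A. B S \<le> B T}"
      by (rule card_mono) (use remove.hyps(1) in auto)
    then show "B T \<ge> 0 \<and> card {S\<in>A - {T0}. B S \<le> B T} \<le> 2 ^ nat \<lfloor>B T\<rfloor>"
    proof -
      have "T \<in> A" using T by simp
      then have "B T \<ge> 0 \<and> card {S\<in>A. B S \<le> B T} \<le> 2 ^ nat \<lfloor>B T\<rfloor>" using remove.prems by blast
      then show ?thesis using \<open>card {S\<in>A - {T0}. B S \<le> B T} \<le> card {S\<in>A. B S \<le> B T}\<close> by linarith
    qed
  qed
  obtain E :: "'b \<Rightarrow> bool list" where E: "inj_on E (A - {T0})" "\<forall>T\<in>A - {T0}. real (length (E T)) \<le> B T"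
    using remove.IH[OF T0(1) hyp] by blast
  define m where "m = nat \<lfloor>B T0\<rfloor>"
  have "{S\<in>A. B S \<le> B T0} = A" using T0 by auto
  then have cA: "card A \<le> 2 ^ m" using remove.prems T0(1) unfolding m_def by metis
  have "card (E ` (A - {T0})) \<le> card (A - {T0})" by (rule card_image_le) (use remove.hyps(1) in simp)
  also have "card (A - {T0}) < card A" using remove.hyps(1) T0(1) by (rule card_Diff1_less)
  also have "card A \<le> 2 ^ m" by (rule cA)
  also have "2 ^ m = card {xs :: bool list. set xs \<subseteq> UNIV \<and> length xs = m}"
    using card_lists_length_eq[of "UNIV::bool set" m] by simp
  finally have lt: "card (E ` (A - {T0})) < card {xs :: bool list. set xs \<subseteq> UNIV \<and> length xs = m}" .
  have "\<not> {xs :: bool list. set xs \<subseteq> UNIV \<and> length xs = m} \<subseteq> E ` (A - {T0})"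
  proof
    assume "{xs :: bool list. set xs \<subseteq> UNIV \<and> length xs = m} \<subseteq> E ` (A - {T0})"
    then have "card {xs :: bool list. set xs \<subseteq> UNIV \<and> length xs = m} \<le> card (E ` (A - {T0}))"
      by (rule card_mono[rotated]) (use remove.hyps(1) in simp)
    with lt show False by simp
  qed
  then obtain l :: "bool list" where l: "length l = m" "l \<notin> E ` (A - {T0})" by auto
  define E' where "E' = E(T0 := l)"
  have "inj_on E' A"
  proof -
    have "inj_on E' (A - {T0})" using E(1) by (auto simp: E'_def inj_on_def)
    moreover have "E' T0 \<notin> E' ` (A - {T0})" using l by (auto simp: E'_def)
    ultimately have "inj_on E' (insert T0 (A - {T0}))" by (intro iffD2[OF inj_on_insert]) auto
    then show ?thesis using insert_Diff[OF T0(1)] by simp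
  qed
  moreover have "\<forall>T\<in>A. real (length (E' T)) \<le> B T"
  proof
    fix T assume "T \<in> A"
    show "real (length (E' T)) \<le> B T"
    proof (cases "T = T0")
      case True
      have "real m \<le> B T0" using remove.prems T0(1) by (simp add: m_def)
      then show ?thesis using True l by (simp add: E'_def)
    next
      case False then show ?thesis using E(2) \<open>T \<in> A\<close> by (simp add: E'_def)
    qed
  qed
  ultimately show ?case by blast
qed

lemma binom_le_mm:
  assumes "j \<le> m"
  shows "real (m choose j) * (real j ^ j * real (m-j) ^ (m-j)) \<le> real m ^ m"
proof -
  have "real m = real j + real (m-j)" using assms by simp
  then have "real m ^ m = (real j + real (m-j)) ^ m" by (simp only:)
  also have "\<dots> = (\<Sum>i\<le>m. real (m choose i) * real j ^ i * real (m-j) ^ (m-i))"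
    by (rule binomial_ring)
  also have "\<dots> \<ge> real (m choose j) * real j ^ j * real (m-j) ^ (m-j)"
    by (rule member_le_sum) (use assms in auto)
  finally show ?thesis by (simp only: mult.assoc)
qed

lemma xlog_pow:
  assumes "m > 0"
  shows "2 powr xlog (real j) (real m) = (real m / real j) ^ j"
proof (cases "j = 0")
  case True then show ?thesis by (simp add: xlog_def)
next
  case False
  have x: "real m / real j > 0" using assms False by simp
  have "2 powr xlog (real j) (real m) = 2 powr (log 2 (real m / real j) * real j)"
    using False by (simp add: xlog_def mult.commute)
  also have "\<dots> = (2 powr log 2 (real m / real j)) powr real j" by (simp add: powr_powr)
  also have "\<dots> = (real m / real j) powr real j" using x by simp
  also have "\<dots> = (real m / real j) ^ j" using x by (simp add: powr_realpow)
  finally show ?thesis .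
qed

lemma binom_entropy:
  assumes "j \<le> m"
  shows "real (m choose j) \<le> 2 powr (xlog (real j) (real m) + xlog (real m - real j) (real m))"
proof (cases "m = 0")
  case True then show ?thesis using assms by (simp add: xlog_def)
next
  case False
  have e: "real m - real j = real (m - j)" using assms by (simp add: of_nat_diff)
  have pos: "real j ^ j * real (m-j) ^ (m-j) > 0"
    by (intro mult_pos_pos) (cases "j = 0"; cases "m - j = 0"; simp)+
  have "2 powr (xlog (real j) (real m) + xlog (real m - real j) (real m))
      = (real m / real j) ^ j * (real m / real (m-j)) ^ (m-j)"
    using False by (simp add: powr_add e xlog_pow)
  also have "\<dots> = real m ^ m / (real j ^ j * real (m-j) ^ (m-j))"
    using assms by (simp add: power_divide power_add[symmetric])
  finally have eq: "2 powr (xlog (real j) (real m) + xlog (real m - real j) (real m))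
      = real m ^ m / (real j ^ j * real (m-j) ^ (m-j))" .
  show ?thesis unfolding eq using binom_le_mm[OF assms] pos by (simp add: pos_le_divide_eq)
qed

lemma trie_prefix:
  assumes "is_trie Alph T" shows "u @ v \<in> T \<Longrightarrow> u \<in> T"
proof (induction v rule: rev_induct)
  case Nil then show ?case by simp
next
  case (snoc x xs)
  then have "(u @ xs) @ [x] \<in> T" by simp
  then have "u @ xs \<in> T" using assms unfolding is_trie_def by blast
  then show ?case using snoc.IH by blast
qed

lemma trie_finite: "is_trie Alph T \<Longrightarrow> finite T" by (simp add: is_trie_def)
lemma trie_root: "is_trie Alph T \<Longrightarrow> [] \<in> T" by (simp add: is_trie_def)
lemma trie_lists: "is_trie Alph T \<Longrightarrow> u \<in> T \<Longrightarrow> u \<in> lists Alph" by (auto simp: is_trie_def)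

lemma trie_length_less_card:
  assumes "is_trie Alph T" "u \<in> T"
  shows "length u < card T"
proof -
  have "(\<lambda>i. take i u) ` {..length u} \<subseteq> T"
  proof
    fix x assume "x \<in> (\<lambda>i. take i u) ` {..length u}"
    then obtain i where "x = take i u" by auto
    then show "x \<in> T" using trie_prefix[OF assms(1), of x "drop i u"] assms(2) by simp
  qed
  moreover have "inj_on (\<lambda>i. take i u) {..length u}"
  proof (rule inj_onI)
    fix i j assume "i \<in> {..length u}" "j \<in> {..length u}" "take i u = take j u"
    then have "length (take i u) = length (take j u)" "i \<le> length u" "j \<le> length u" by auto
    then show "i = j" by simp
  qed
  ultimately have c1: "card ((\<lambda>i. take i u) ` {..length u}) \<le> card T"
    and c2: "card ((\<lambda>i. take i u) ` {..length u}) = card {..length u}"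
    using card_mono[OF trie_finite[OF assms(1)]] card_image by blast+
  have "card {..length u} \<le> card T" using c1 unfolding c2 .
  then show ?thesis by simp
qed

lemma tout_sub: "is_trie Alph T \<Longrightarrow> tout T u \<subseteq> Alph"
  by (auto simp: tout_def is_trie_def)

lemma n_ctx_sym_less:
  assumes "is_trie Alph T"
  shows "n_ctx_sym T k w c < card T"
proof -
  have "(\<lambda>u. u @ [c]) ` {u \<in> T. tctx k u = w \<and> c \<in> tout T u} \<subseteq> T - {[]}"
    by (auto simp: tout_def)
  moreover have "inj_on (\<lambda>u. u @ [c]) {u \<in> T. tctx k u = w \<and> c \<in> tout T u}"
    by (rule inj_onI) simp
  ultimately have "card ((\<lambda>u. u @ [c]) ` {u \<in> T. tctx k u = w \<and> c \<in> tout T u}) \<le> card (T - {[]})"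
     "card ((\<lambda>u. u @ [c]) ` {u \<in> T. tctx k u = w \<and> c \<in> tout T u}) = n_ctx_sym T k w c"
    unfolding n_ctx_sym_def using card_mono[of "T - {[]}"] trie_finite[OF assms] card_image by auto
  then have "n_ctx_sym T k w c \<le> card (T - {[]})" by simp
  also have "\<dots> < card T" by (rule card_Diff1_less[OF trie_finite[OF assms] trie_root[OF assms]])
  finally show ?thesis .
qed

definition llt :: "'a::linorder list \<Rightarrow> 'a list \<Rightarrow> bool" where
  "llt v u \<longleftrightarrow> length v < length u \<or> (length v = length u \<and> v < u)"

lemma llt_irrefl: "\<not> llt u u" by (simp add: llt_def)
lemma llt_trans: "llt u v \<Longrightarrow> llt v w \<Longrightarrow> llt u w" by (auto simp: llt_def)
lemma llt_total: "u \<noteq> v \<Longrightarrow> llt u v \<or> llt v u"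
  unfolding llt_def using less_linear[of "length u" "length v"] less_linear[of u v] by auto
lemma llt_length: "llt v u \<Longrightarrow> length v \<le> length u" by (auto simp: llt_def)

definition rank :: "'a::linorder list set \<Rightarrow> nat \<Rightarrow> 'a list \<Rightarrow> nat" where
  "rank T k u = card {v\<in>T. tctx k v = tctx k u \<and> llt v u}"

definition gset :: "'a::linorder list set \<Rightarrow> nat \<Rightarrow> 'a option list \<Rightarrow> 'a \<Rightarrow> nat set" where
  "gset T k w c = rank T k ` {u\<in>T. tctx k u = w \<and> c \<in> tout T u}"

lemma rank_mono_strict:
  assumes "finite T" "u \<in> T" "u' \<in> T" "tctx k u = tctx k u'" "llt u u'"
  shows "rank T k u < rank T k u'"
  unfolding rank_def
proof (rule psubset_card_mono)
  show "finite {v \<in> T. tctx k v = tctx k u' \<and> llt v u'}" using assms(1) by simp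
  show "{v \<in> T. tctx k v = tctx k u \<and> llt v u} \<subset> {v \<in> T. tctx k v = tctx k u' \<and> llt v u'}"
  proof (rule psubsetI)
    show "{v \<in> T. tctx k v = tctx k u \<and> llt v u} \<subseteq> {v \<in> T. tctx k v = tctx k u' \<and> llt v u'}"
      using llt_trans[OF _ assms(5)] assms(4) by auto
    have "u \<in> {v \<in> T. tctx k v = tctx k u' \<and> llt v u'}" using assms(2,4,5) by simp
    moreover have "u \<notin> {v \<in> T. tctx k v = tctx k u \<and> llt v u}" by (simp add: llt_irrefl)
    ultimately show "{v \<in> T. tctx k v = tctx k u \<and> llt v u} \<noteq> {v \<in> T. tctx k v = tctx k u' \<and> llt v u'}"
      by blast
  qed
qed

lemma rank_inj:
  assumes "finite T" "u \<in> T" "u' \<in> T" "tctx k u = tctx k u'" "rank T k u = rank T k u'"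
  shows "u = u'"
proof (rule ccontr)
  assume "u \<noteq> u'"
  then have "llt u u' \<or> llt u' u" by (rule llt_total)
  then show False
    using rank_mono_strict[OF assms(1-4)] rank_mono_strict[OF assms(1) assms(3) assms(2) assms(4)[symmetric]]
      assms(5) by auto
qed

lemma rank_less:
  assumes "finite T" "u \<in> T"
  shows "rank T k u < n_ctx T k (tctx k u)"
  unfolding rank_def n_ctx_def
proof (rule psubset_card_mono)
  show "finite {v \<in> T. tctx k v = tctx k u}" using assms(1) by simp
  have "u \<in> {v \<in> T. tctx k v = tctx k u}" using assms(2) by simp
  moreover have "u \<notin> {v \<in> T. tctx k v = tctx k u \<and> llt v u}" by (simp add: llt_irrefl)
  ultimately show "{v \<in> T. tctx k v = tctx k u \<and> llt v u} \<subset> {v \<in> T. tctx k v = tctx k u}" by blast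
qed

lemma gset_sub:
  assumes "finite T" shows "gset T k w c \<subseteq> {0..<n_ctx T k w}"
  using rank_less[OF assms] by (auto simp: gset_def)

lemma gset_card:
  assumes "finite T" shows "card (gset T k w c) = n_ctx_sym T k w c"
  unfolding gset_def n_ctx_sym_def
proof (rule card_image, rule inj_onI)
  fix x y assume "x \<in> {u \<in> T. tctx k u = w \<and> c \<in> tout T u}" "y \<in> {u \<in> T. tctx k u = w \<and> c \<in> tout T u}"
    "rank T k x = rank T k y"
  then show "x = y" using rank_inj[OF assms, of x y k] by auto
qed

lemma recon_step:
  assumes S1: "is_trie Alph S1" and S2: "is_trie Alph S2"
    and g: "\<forall>u\<in>S1 \<inter> S2. \<forall>c\<in>Alph. gset S1 k (tctx k u) c = gset S2 k (tctx k u) c"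
    and IH: "\<forall>v. length v < length u \<longrightarrow> (v \<in> S1 \<longleftrightarrow> v \<in> S2)"
    and u: "u \<in> S1" "u \<noteq> []"
  shows "u \<in> S2"
proof -
  obtain p c where pc: "u = p @ [c]" using u(2) by (cases u rule: rev_exhaust) auto
  have p1: "p \<in> S1" using trie_prefix[OF S1] u(1) pc by blast
  have p2: "p \<in> S2" using IH p1 pc by simp
  have cA: "c \<in> Alph" using trie_lists[OF S1 u(1)] pc by simp
  have cout: "c \<in> tout S1 p" using u(1) pc by (simp add: tout_def)
  have req: "{v\<in>S1. tctx k v = tctx k p \<and> llt v p} = {v\<in>S2. tctx k v = tctx k p \<and> llt v p}"
  proof -
    have "\<And>v. llt v p \<Longrightarrow> (v \<in> S1 \<longleftrightarrow> v \<in> S2)"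
    proof -
      fix v assume "llt v p"
      then have "length v < length u" using llt_length[of v p] pc by simp
      then show "v \<in> S1 \<longleftrightarrow> v \<in> S2" using IH by blast
    qed
    then show ?thesis by blast
  qed
  have rk: "rank S1 k p = rank S2 k p" unfolding rank_def using req by simp
  have "rank S1 k p \<in> gset S1 k (tctx k p) c" using p1 cout by (auto simp: gset_def)
  then have "rank S1 k p \<in> gset S2 k (tctx k p) c" using g[rule_format, OF IntI[OF p1 p2] cA] by simp
  then obtain u' where u': "u' \<in> S2" "tctx k u' = tctx k p" "c \<in> tout S2 u'" "rank S2 k u' = rank S2 k p"
    unfolding gset_def using rk by auto
  have "u' = p" using rank_inj[OF trie_finite[OF S2] u'(1) p2 u'(2) u'(4)] .
  then show ?thesis using u'(3) pc by (simp add: tout_def)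
qed

lemma reconstruct:
  assumes S1: "is_trie Alph S1" and S2: "is_trie Alph S2"
    and g: "\<forall>u\<in>S1 \<inter> S2. \<forall>c\<in>Alph. gset S1 k (tctx k u) c = gset S2 k (tctx k u) c"
  shows "S1 = S2"
proof -
  have g': "\<forall>u\<in>S2 \<inter> S1. \<forall>c\<in>Alph. gset S2 k (tctx k u) c = gset S1 k (tctx k u) c"
    using g by auto
  have key: "\<forall>u. length u < N \<longrightarrow> (u \<in> S1 \<longleftrightarrow> u \<in> S2)" for N
  proof (induction N)
    case 0 then show ?case by simp
  next
    case (Suc N)
    show ?case
    proof (intro allI impI)
      fix u :: "'a list" assume "length u < Suc N"
      then have IH: "\<forall>v. length v < length u \<longrightarrow> (v \<in> S1 \<longleftrightarrow> v \<in> S2)" using Suc.IH by auto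
      have IH': "\<forall>v. length v < length u \<longrightarrow> (v \<in> S2 \<longleftrightarrow> v \<in> S1)" using IH by blast
      show "u \<in> S1 \<longleftrightarrow> u \<in> S2"
      proof (cases "u = []")
        case True then show ?thesis using trie_root[OF S1] trie_root[OF S2] by simp
      next
        case False
        show ?thesis using recon_step[OF S1 S2 g IH _ False] recon_step[OF S2 S1 g' IH' _ False] by blast
      qed
    qed
  qed
  show ?thesis
  proof (rule set_eqI)
    fix x show "x \<in> S1 \<longleftrightarrow> x \<in> S2" using key[of "Suc (length x)"] by simp
  qed
qed


definition FullC :: "'a set \<Rightarrow> nat \<Rightarrow> 'a option list set" where
  "FullC Alph k = map Some ` {v \<in> lists Alph. length v = k}"

definition phi :: "'a set \<Rightarrow> nat \<Rightarrow> 'a list set \<Rightarrow> 'a list set \<times> ('a option list \<times> 'a \<Rightarrow> nat)" where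
  "phi Alph k S = (S \<inter> {u. length u \<le> k}, restrict (\<lambda>(w, c). n_ctx_sym S k w c) (FullC Alph k \<times> Alph))"

lemma short_ctx:
  assumes "u \<in> lists Alph" "tctx k u \<notin> FullC Alph k"
  shows "length u < k"
proof (rule ccontr)
  assume "\<not> length u < k"
  then have "tctx k u = map Some (drop (length u - k) u)" by (simp add: tctx_full)
  moreover have "drop (length u - k) u \<in> {v \<in> lists Alph. length v = k}"
    using assms(1) \<open>\<not> length u < k\<close> by (auto dest: in_set_dropD)
  ultimately show False using assms(2) unfolding FullC_def by blast
qed

lemma det_sym:
  assumes S1: "is_trie Alph S1" and S2: "is_trie Alph S2" and ph: "phi Alph k S1 = phi Alph k S2"
  shows "n_ctx_sym S1 k w c = n_ctx_sym S2 k w c"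
proof -
  have top: "S1 \<inter> {u. length u \<le> k} = S2 \<inter> {u. length u \<le> k}"
    and rs: "restrict (\<lambda>(w, c). n_ctx_sym S1 k w c) (FullC Alph k \<times> Alph)
           = restrict (\<lambda>(w, c). n_ctx_sym S2 k w c) (FullC Alph k \<times> Alph)"
    using ph by (auto simp: phi_def)
  have topx: "length x \<le> k \<Longrightarrow> x \<in> S1 \<longleftrightarrow> x \<in> S2" for x using top by blast
  show ?thesis
  proof (cases "c \<in> Alph")
    case False
    then have e1: "{u \<in> S1. tctx k u = w \<and> c \<in> tout S1 u} = {}" and e2: "{u \<in> S2. tctx k u = w \<and> c \<in> tout S2 u} = {}"
      using tout_sub[OF S1] tout_sub[OF S2] by auto
    show ?thesis unfolding n_ctx_sym_def e1 e2 by simp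
  next
    case cA: True
    show ?thesis
    proof (cases "w \<in> FullC Alph k")
      case True
      then show ?thesis using fun_cong[OF rs, of "(w, c)"] cA by simp
    next
      case False
      have "{u \<in> S1. tctx k u = w \<and> c \<in> tout S1 u} = {u \<in> S2. tctx k u = w \<and> c \<in> tout S2 u}"
      proof (intro set_eqI iffI)
        fix u assume u: "u \<in> {u \<in> S1. tctx k u = w \<and> c \<in> tout S1 u}"
        then have "length u < k" using short_ctx[OF trie_lists[OF S1] _ ] False by blast
        then show "u \<in> {u \<in> S2. tctx k u = w \<and> c \<in> tout S2 u}"
          using u topx[of u] topx[of "u @ [c]"] by (auto simp: tout_def)
      next
        fix u assume u: "u \<in> {u \<in> S2. tctx k u = w \<and> c \<in> tout S2 u}"
        then have "length u < k" using short_ctx[OF trie_lists[OF S2] _ ] False by blast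
        then show "u \<in> {u \<in> S1. tctx k u = w \<and> c \<in> tout S1 u}"
          using u topx[of u] topx[of "u @ [c]"] by (auto simp: tout_def)
      qed
      then show ?thesis by (simp add: n_ctx_sym_def)
    qed
  qed
qed

lemma n_ctx_snoc_Some:
  assumes S: "is_trie Alph S"
  shows "n_ctx S (Suc k) (w' @ [Some c]) = card {p \<in> S. tctx k p = w' \<and> c \<in> tout S p}"
proof -
  have "{u \<in> S. tctx (Suc k) u = w' @ [Some c]} = (\<lambda>p. p @ [c]) ` {p \<in> S. tctx k p = w' \<and> c \<in> tout S p}"
  proof (intro set_eqI iffI)
    fix u assume u: "u \<in> {u \<in> S. tctx (Suc k) u = w' @ [Some c]}"
    show "u \<in> (\<lambda>p. p @ [c]) ` {p \<in> S. tctx k p = w' \<and> c \<in> tout S p}"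
    proof (cases u rule: rev_exhaust)
      case Nil
      then show ?thesis using u by (simp add: tparent_def tlabel_def)
    next
      case (snoc p c')
      then have "tctx k p = w'" "c' = c" using u by (auto simp: tparent_def tlabel_def)
      moreover have "p \<in> S" using trie_prefix[OF S] u snoc by blast
      ultimately show ?thesis using u snoc by (auto simp: tout_def)
    qed
  next
    fix u assume "u \<in> (\<lambda>p. p @ [c]) ` {p \<in> S. tctx k p = w' \<and> c \<in> tout S p}"
    then show "u \<in> {u \<in> S. tctx (Suc k) u = w' @ [Some c]}" by (auto simp: tout_def tparent_def tlabel_def)
  qed
  moreover have "inj_on (\<lambda>p. p @ [c]) {p \<in> S. tctx k p = w' \<and> c \<in> tout S p}" by (rule inj_onI) simp
  ultimately show ?thesis unfolding n_ctx_def by (simp add: card_image)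
qed

lemma card_P_sum:
  assumes S: "is_trie Alph S" and I: "finite I" "(\<lambda>p. hd (tctx (Suc k) p)) ` S \<subseteq> I"
  shows "card {p \<in> S. tctx k p = w' \<and> c \<in> tout S p} = (\<Sum>a\<in>I. n_ctx_sym S (Suc k) (a # w') c)"
proof -
  have "card {p \<in> S. tctx k p = w' \<and> c \<in> tout S p}
      = (\<Sum>a\<in>I. card {p \<in> {p \<in> S. tctx k p = w' \<and> c \<in> tout S p}. hd (tctx (Suc k) p) = a})"
    by (rule card_fibers) (use trie_finite[OF S] I in auto)
  also have "\<dots> = (\<Sum>a\<in>I. n_ctx_sym S (Suc k) (a # w') c)"
  proof (rule sum.cong[OF refl])
    fix a
    have "{p \<in> {p \<in> S. tctx k p = w' \<and> c \<in> tout S p}. hd (tctx (Suc k) p) = a}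
        = {p \<in> S. tctx (Suc k) p = a # w' \<and> c \<in> tout S p}"
    proof (intro set_eqI iffI)
      fix p assume "p \<in> {p \<in> {p \<in> S. tctx k p = w' \<and> c \<in> tout S p}. hd (tctx (Suc k) p) = a}"
      then show "p \<in> {p \<in> S. tctx (Suc k) p = a # w' \<and> c \<in> tout S p}"
        using tctx_Cons[of k p] by auto
    next
      fix p assume "p \<in> {p \<in> S. tctx (Suc k) p = a # w' \<and> c \<in> tout S p}"
      then show "p \<in> {p \<in> {p \<in> S. tctx k p = w' \<and> c \<in> tout S p}. hd (tctx (Suc k) p) = a}"
        using tctx_Cons[of k p] by auto
    qed
    then show "card {p \<in> {p \<in> S. tctx k p = w' \<and> c \<in> tout S p}. hd (tctx (Suc k) p) = a}
        = n_ctx_sym S (Suc k) (a # w') c" by (simp add: n_ctx_sym_def)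
  qed
  finally show ?thesis .
qed

lemma det_ctx:
  assumes S1: "is_trie Alph S1" and S2: "is_trie Alph S2" and cd: "card S1 = card S2"
    and sym: "\<forall>w c. n_ctx_sym S1 k w c = n_ctx_sym S2 k w c"
  shows "n_ctx S1 k w = n_ctx S2 k w"
proof (cases k)
  case 0
  then show ?thesis using cd by (cases "w = []") (auto simp: n_ctx_def)
next
  case (Suc k')
  show ?thesis
  proof (cases w rule: rev_exhaust)
    case Nil
    have e1: "{u \<in> S1. tctx k u = w} = {}" and e2: "{u \<in> S2. tctx k u = w} = {}"
      using Suc Nil by (auto dest!: arg_cong[of _ _ length] simp del: tctx.simps)
    show ?thesis unfolding n_ctx_def e1 e2 by simp
  next
    case (snoc w' x)
    show ?thesis
    proof (cases x)
      case None
      have "\<And>S u. u \<in> S \<Longrightarrow> tctx k u = w \<Longrightarrow> u = []"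
      proof -
        fix S :: "'a list set" and u assume "u \<in> S" "tctx k u = w"
        then show "u = []" using snoc None Suc
          by (cases u rule: rev_exhaust) (auto simp: tlabel_def)
      qed
      then have "{u \<in> S1. tctx k u = w} = {u \<in> S2. tctx k u = w}"
        using trie_root[OF S1] trie_root[OF S2] by blast
      then show ?thesis by (simp add: n_ctx_def)
    next
      case (Some c)
      define I where "I = (\<lambda>p. hd (tctx (Suc k') p)) ` (S1 \<union> S2)"
      have fI: "finite I" using trie_finite[OF S1] trie_finite[OF S2] by (simp add: I_def)
      have "n_ctx S1 k w = card {p \<in> S1. tctx k' p = w' \<and> c \<in> tout S1 p}"
        using n_ctx_snoc_Some[OF S1, of k' w' c] Suc snoc Some by simp
      also have "\<dots> = (\<Sum>a\<in>I. n_ctx_sym S1 (Suc k') (a # w') c)"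
        by (rule card_P_sum[OF S1 fI]) (auto simp: I_def)
      also have "\<dots> = (\<Sum>a\<in>I. n_ctx_sym S2 (Suc k') (a # w') c)" using sym Suc by simp
      also have "\<dots> = card {p \<in> S2. tctx k' p = w' \<and> c \<in> tout S2 p}"
        by (rule card_P_sum[OF S2 fI, symmetric]) (auto simp: I_def)
      also have "\<dots> = n_ctx S2 k w"
        using n_ctx_snoc_Some[OF S2, of k' w' c] Suc snoc Some by simp
      finally show ?thesis .
    qed
  qed
qed

lemma ctx_image_eq:
  assumes "finite S1" "finite S2" "\<forall>w. n_ctx S1 k w = n_ctx S2 k w"
  shows "tctx k ` S1 = tctx k ` S2"
proof -
  have key: "w \<in> tctx k ` S \<longleftrightarrow> n_ctx S k w > 0" if "finite S" for S :: "'a list set" and w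
    using that by (auto simp: n_ctx_def card_gt_0_iff)
  show ?thesis
  proof (rule set_eqI)
    fix w show "w \<in> tctx k ` S1 \<longleftrightarrow> w \<in> tctx k ` S2"
      using key[OF assms(1), of w] key[OF assms(2), of w] assms(3) by simp
  qed
qed


definition EH :: "'a set \<Rightarrow> nat \<Rightarrow> 'a list set \<Rightarrow> real" where
  "EH Alph k S = (\<Sum>w \<in> tctx k ` S. \<Sum>c \<in> Alph.
      xlog (real (n_ctx_sym S k w c)) (real (n_ctx S k w))
    + xlog (real (n_ctx S k w) - real (n_ctx_sym S k w c)) (real (n_ctx S k w)))"

lemma n_sym_le: "finite S \<Longrightarrow> n_ctx_sym S k w c \<le> n_ctx S k w"
  unfolding n_ctx_sym_def n_ctx_def by (rule card_mono) auto

lemma fiber_bound: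
  fixes Alph :: "'a::linorder set"
  assumes fA: "finite Alph" and F: "\<forall>S\<in>F. is_trie Alph S \<and> phi Alph k S = phi Alph k S0 \<and> card S = card S0"
    and S0: "S0 \<in> F"
  shows "real (card F) \<le> 2 powr EH Alph k S0"
proof -
  have T0: "is_trie Alph S0" using F S0 by blast
  have FS: "is_trie Alph S" "phi Alph k S = phi Alph k S0" "card S = card S0" if "S \<in> F" for S
    using F that by auto
  have sym: "n_ctx_sym S k w c = n_ctx_sym S0 k w c" if "S \<in> F" for S w c
    by (rule det_sym[OF FS(1)[OF that] T0 FS(2)[OF that]])
  have ctx: "n_ctx S k w = n_ctx S0 k w" if "S \<in> F" for S w
    by (rule det_ctx[OF FS(1)[OF that] T0 FS(3)[OF that]]) (use sym[OF that] in simp)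
  have cim: "tctx k ` S = tctx k ` S0" if "S \<in> F" for S
    by (rule ctx_image_eq[OF trie_finite[OF FS(1)[OF that]] trie_finite[OF T0]]) (use ctx[OF that] in simp)
  define C0 where "C0 = tctx k ` S0"
  have fC0: "finite (C0 \<times> Alph)" using trie_finite[OF T0] fA by (simp add: C0_def)
  define psi where "psi S = restrict (\<lambda>x. gset S k (fst x) (snd x)) (C0 \<times> Alph)" for S
  define Bs where "Bs x = {G. G \<subseteq> {0..<n_ctx S0 k (fst x)} \<and> card G = n_ctx_sym S0 k (fst x) (snd x)}" for x
  have inj: "inj_on psi F"
  proof (rule inj_onI)
    fix S S' assume S: "S \<in> F" and S': "S' \<in> F" and eq: "psi S = psi S'"
    have tS: "is_trie Alph S" "is_trie Alph S'" using F S S' by auto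
    show "S = S'"
    proof (rule reconstruct[OF tS])
      show "\<forall>u\<in>S \<inter> S'. \<forall>c\<in>Alph. gset S k (tctx k u) c = gset S' k (tctx k u) c"
      proof (intro ballI)
        fix u c assume u: "u \<in> S \<inter> S'" and c: "c \<in> Alph"
        have "tctx k u \<in> C0" using cim[OF S] u unfolding C0_def by blast
        then show "gset S k (tctx k u) c = gset S' k (tctx k u) c"
          using fun_cong[OF eq, of "(tctx k u, c)"] c by (simp add: psi_def)
      qed
    qed
  qed
  have sub: "psi ` F \<subseteq> PiE (C0 \<times> Alph) Bs"
  proof
    fix G assume "G \<in> psi ` F"
    then obtain S where S: "S \<in> F" "G = psi S" by blast
    have fS: "finite S" using F S(1) trie_finite by blast
    have gs: "gset S k a b \<subseteq> {0..<n_ctx S0 k a}" for a b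
      using gset_sub[OF fS, of k a b] ctx[OF S(1), of a] by simp
    show "G \<in> PiE (C0 \<times> Alph) Bs"
      unfolding S(2) psi_def Bs_def
      using gs gset_card[OF fS] sym[OF S(1)] by auto
  qed
  have "card F = card (psi ` F)" using inj by (simp add: card_image)
  also have "\<dots> \<le> card (PiE (C0 \<times> Alph) Bs)"
    by (rule card_mono[OF _ sub]) (use fC0 in \<open>simp add: finite_PiE Bs_def\<close>)
  also have "\<dots> = (\<Prod>x\<in>C0 \<times> Alph. n_ctx S0 k (fst x) choose n_ctx_sym S0 k (fst x) (snd x))"
    using fC0 by (simp add: card_PiE Bs_def n_subsets)
  finally have c1: "real (card F) \<le> (\<Prod>x\<in>C0 \<times> Alph. real (n_ctx S0 k (fst x) choose n_ctx_sym S0 k (fst x) (snd x)))"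
    by (simp only: of_nat_prod[symmetric] of_nat_le_iff)
  also have "\<dots> \<le> (\<Prod>x\<in>C0 \<times> Alph. 2 powr (xlog (real (n_ctx_sym S0 k (fst x) (snd x))) (real (n_ctx S0 k (fst x)))
    + xlog (real (n_ctx S0 k (fst x)) - real (n_ctx_sym S0 k (fst x) (snd x))) (real (n_ctx S0 k (fst x)))))"
  proof (rule prod_mono)
    fix x assume "x \<in> C0 \<times> Alph"
    show "0 \<le> real (n_ctx S0 k (fst x) choose n_ctx_sym S0 k (fst x) (snd x)) \<and>
      real (n_ctx S0 k (fst x) choose n_ctx_sym S0 k (fst x) (snd x)) \<le> 2 powr (xlog (real (n_ctx_sym S0 k (fst x) (snd x))) (real (n_ctx S0 k (fst x)))
    + xlog (real (n_ctx S0 k (fst x)) - real (n_ctx_sym S0 k (fst x) (snd x))) (real (n_ctx S0 k (fst x))))"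
      using binom_entropy[OF n_sym_le[OF trie_finite[OF T0]]] by simp
  qed
  also have "\<dots> = 2 powr (\<Sum>x\<in>C0 \<times> Alph. xlog (real (n_ctx_sym S0 k (fst x) (snd x))) (real (n_ctx S0 k (fst x)))
    + xlog (real (n_ctx S0 k (fst x)) - real (n_ctx_sym S0 k (fst x) (snd x))) (real (n_ctx S0 k (fst x))))"
    by (simp add: powr_sum)
  also have "\<dots> = 2 powr EH Alph k S0"
    unfolding EH_def C0_def by (simp add: sum.cartesian_product case_prod_beta)
  finally show ?thesis .
qed

lemma trie_set_finite:
  assumes "finite Alph"
  shows "finite {T. is_trie Alph T \<and> card T = n}"
proof (rule finite_subset)
  show "{T. is_trie Alph T \<and> card T = n} \<subseteq> Pow {xs. set xs \<subseteq> Alph \<and> length xs \<le> n}"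
    using trie_length_less_card trie_lists by fastforce
  show "finite (Pow {xs. set xs \<subseteq> Alph \<and> length xs \<le> n})" using assms by (simp add: finite_lists_length_le)
qed

lemma count_le:
  fixes n :: nat and h :: real and Alph :: "'a::linorder set"
  assumes fA: "finite Alph"
  defines "X \<equiv> {T. is_trie Alph T \<and> card T = n}"
  shows "real (card {S\<in>X. EH Alph k S \<le> h}) \<le> real (card (phi Alph k ` X)) * 2 powr h"
proof -
  have fX: "finite X" using trie_set_finite[OF fA] by (simp add: X_def)
  have "card {S\<in>X. EH Alph k S \<le> h} = (\<Sum>f\<in>phi Alph k ` X. card {S\<in>{S\<in>X. EH Alph k S \<le> h}. phi Alph k S = f})"
    by (rule card_fibers) (use fX in auto)
  then have "real (card {S\<in>X. EH Alph k S \<le> h}) = (\<Sum>f\<in>phi Alph k ` X. real (card {S\<in>{S\<in>X. EH Alph k S \<le> h}. phi Alph k S = f}))"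
    by simp
  also have "\<dots> \<le> (\<Sum>f\<in>phi Alph k ` X. 2 powr h)"
  proof (rule sum_mono)
    fix f assume "f \<in> phi Alph k ` X"
    define F where "F = {S\<in>{S\<in>X. EH Alph k S \<le> h}. phi Alph k S = f}"
    have "real (card F) \<le> 2 powr h"
    proof (cases "F = {}")
      case True then show ?thesis by simp
    next
      case False
      then obtain S0 where S0: "S0 \<in> F" by blast
      have "real (card F) \<le> 2 powr EH Alph k S0"
        by (rule fiber_bound[OF fA _ S0]) (use S0 in \<open>auto simp: F_def X_def\<close>)
      also have "\<dots> \<le> 2 powr h" using S0 by (simp add: F_def)
      finally show ?thesis .
    qed
    then show "real (card {S\<in>{S\<in>X. EH Alph k S \<le> h}. phi Alph k S = f}) \<le> 2 powr h"
      by (simp add: F_def)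
  qed
  also have "\<dots> = real (card (phi Alph k ` X)) * 2 powr h" by simp
  finally show ?thesis .
qed

lemma phi_card:
  assumes fA: "finite Alph"
  shows "card (phi Alph k ` {T. is_trie Alph T \<and> card T = n})
      \<le> 2 ^ (\<Sum>i\<le>k. card Alph ^ i) * n ^ (card Alph ^ k * card Alph)"
proof -
  let ?X = "{T. is_trie Alph T \<and> card T = n}"
  let ?Top = "{xs. set xs \<subseteq> Alph \<and> length xs \<le> k}"
  have fF: "finite (FullC Alph k)" unfolding FullC_def using fA
    by (intro finite_imageI) (simp add: lists_eq_set finite_lists_length_eq)
  have cF: "card (FullC Alph k) = card Alph ^ k"
  proof -
    have "card (FullC Alph k) = card {v \<in> lists Alph. length v = k}"
      unfolding FullC_def by (rule card_image) (simp add: inj_on_def)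
    also have "{v \<in> lists Alph. length v = k} = {xs. set xs \<subseteq> Alph \<and> length xs = k}" by auto
    finally show ?thesis using card_lists_length_eq[OF fA] by simp
  qed
  have sub: "phi Alph k ` ?X \<subseteq> Pow ?Top \<times> PiE (FullC Alph k \<times> Alph) (\<lambda>_. {0..<n})"
  proof
    fix p assume "p \<in> phi Alph k ` ?X"
    then obtain T where T: "is_trie Alph T" "card T = n" "p = phi Alph k T" by blast
    have "T \<inter> {u. length u \<le> k} \<subseteq> ?Top" using trie_lists[OF T(1)] by auto
    moreover have "restrict (\<lambda>(w, c). n_ctx_sym T k w c) (FullC Alph k \<times> Alph) \<in> PiE (FullC Alph k \<times> Alph) (\<lambda>_. {0..<n})"
      using n_ctx_sym_less[OF T(1)] T(2) by auto
    ultimately show "p \<in> Pow ?Top \<times> PiE (FullC Alph k \<times> Alph) (\<lambda>_. {0..<n})"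
      using T(3) by (simp add: phi_def)
  qed
  have "card (phi Alph k ` ?X) \<le> card (Pow ?Top \<times> PiE (FullC Alph k \<times> Alph) (\<lambda>_. {0..<n}))"
    by (rule card_mono[OF _ sub]) (use fA fF in \<open>simp add: finite_PiE finite_lists_length_le\<close>)
  also have "\<dots> = 2 ^ card ?Top * n ^ card (FullC Alph k \<times> Alph)"
    using fA fF by (simp add: card_cartesian_product card_Pow finite_lists_length_le card_PiE)
  also have "\<dots> = 2 ^ (\<Sum>i\<le>k. card Alph ^ i) * n ^ (card Alph ^ k * card Alph)"
    using card_lists_length_le[OF fA, of k] cF fA fF by (simp add: card_cartesian_product)
  finally show ?thesis .
qed


lemma geom_le:
  assumes "(s::nat) \<ge> 2"
  shows "(\<Sum>i\<le>k. s ^ i) + 1 \<le> 2 * s ^ k"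
proof (induction k)
  case 0 then show ?case by simp
next
  case (Suc k)
  have h1: "2 * s ^ k \<le> s * s ^ k" using assms by simp
  have h2: "(\<Sum>i\<le>Suc k. s ^ i) + 1 = ((\<Sum>i\<le>k. s ^ i) + 1) + s * s ^ k" by simp
  have h3: "2 * s ^ Suc k = s * s ^ k + s * s ^ k" by simp
  show ?case unfolding h2 h3 using Suc h1 by linarith
qed

lemma main_arith:
  assumes s: "(s::nat) \<ge> 2" and n: "n \<ge> 3"
  shows "real (2 ^ (\<Sum>i\<le>k. s ^ i) * n ^ (s ^ k * s))
      \<le> 2 powr (real ((s + 1) * s ^ k) * real_of_int \<lceil>log 2 (real n)\<rceil>)"
proof -
  define L where "L = nat \<lceil>log 2 (real n)\<rceil>"
  have "log 2 (real n) > log 2 2" using n by (subst log_less_cancel_iff) auto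
  then have lg: "log 2 (real n) > 1" by simp
  then have ceil: "\<lceil>log 2 (real n)\<rceil> \<ge> 2" by (simp add: le_ceiling_iff)
  have L2: "L \<ge> 2" using ceil unfolding L_def by (subst le_nat_iff) auto
  have Lr: "real_of_int \<lceil>log 2 (real n)\<rceil> = real L" using ceil by (simp add: L_def)
  have "real n = 2 powr log 2 (real n)" using n by simp
  also have "\<dots> \<le> 2 powr real L" using Lr by (intro powr_mono) (linarith, simp)
  also have "\<dots> = 2 ^ L" by (simp add: powr_realpow)
  finally have nL: "n \<le> 2 ^ L" by (metis of_nat_le_iff of_nat_numeral of_nat_power)
  have "(4::nat) \<le> 2 ^ L" using L2 by (metis power2_eq_square power_increasing_iff numeral_Bit0 num_double
        one_less_numeral_iff semiring_norm(76) mult_2)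
  have a: "(2::nat) ^ (\<Sum>i\<le>k. s ^ i) \<le> (2 ^ L) ^ (s ^ k)"
  proof -
    have "(2::nat) ^ (\<Sum>i\<le>k. s ^ i) \<le> 2 ^ (2 * s ^ k)" using geom_le[OF s, of k] by (intro power_increasing) auto
    also have "\<dots> = 4 ^ (s ^ k)" by (simp add: power_mult)
    also have "\<dots> \<le> (2 ^ L) ^ (s ^ k)" using \<open>4 \<le> 2 ^ L\<close> by (rule power_mono) simp
    finally show ?thesis .
  qed
  have b: "n ^ (s ^ k * s) \<le> (2 ^ L) ^ (s ^ k * s)" using nL by (rule power_mono) simp
  have "2 ^ (\<Sum>i\<le>k. s ^ i) * n ^ (s ^ k * s) \<le> (2 ^ L) ^ (s ^ k) * (2 ^ L) ^ (s ^ k * s)"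
    using a b by (rule mult_mono) auto
  also have "\<dots> = 2 ^ (L * ((s + 1) * s ^ k))"
    by (simp add: power_add[symmetric] power_mult[symmetric] algebra_simps)
  finally have "real (2 ^ (\<Sum>i\<le>k. s ^ i) * n ^ (s ^ k * s)) \<le> 2 ^ (L * ((s + 1) * s ^ k))"
    by (metis of_nat_le_iff of_nat_numeral of_nat_power)
  also have "\<dots> = 2 powr (real ((s + 1) * s ^ k) * real_of_int \<lceil>log 2 (real n)\<rceil>)"
    unfolding Lr by (simp add: powr_realpow[symmetric] mult.commute)
  finally show ?thesis .
qed

lemma unary_eq:
  assumes "card Alph \<le> 1" "finite Alph" "u \<in> lists Alph" "v \<in> lists Alph" "length v \<le> length u"
  shows "v = take (length v) u"
proof (rule nth_equalityI)
  show "length v = length (take (length v) u)" using assms(5) by simp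
  fix i assume i: "i < length v"
  have "v ! i \<in> Alph" "u ! i \<in> Alph" using assms(3,4,5) i by (auto simp: lists_eq_set)
  then have "v ! i = u ! i" using assms(1,2) card_le_Suc0_iff_eq by auto
  then show "v ! i = take (length v) u ! i" using i assms(5) by simp
qed

lemma unary_sub:
  assumes "card Alph \<le> 1" "finite Alph" "is_trie Alph S1" "is_trie Alph S2" "u2 \<in> S2"
    and "\<forall>x\<in>S1. length x \<le> length u2"
  shows "S1 \<subseteq> S2"
proof
  fix x assume x: "x \<in> S1"
  have "x = take (length x) u2"
    using unary_eq[OF assms(1,2) trie_lists[OF assms(4,5)] trie_lists[OF assms(3) x]] assms(6) x by blast
  then have "x @ drop (length x) u2 \<in> S2" using assms(5) by (metis append_take_drop_id)
  then show "x \<in> S2" using trie_prefix[OF assms(4)] by blast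
qed

lemma maxlen:
  assumes "finite S" "S \<noteq> {}"
  obtains u where "u \<in> S" "\<forall>x\<in>S. length x \<le> length u"
proof -
  have "Max (length ` S) \<in> length ` S" using assms by simp
  then obtain u where "u \<in> S" "length u = Max (length ` S)" by auto
  moreover have "\<forall>x\<in>S. length x \<le> Max (length ` S)" using assms by simp
  ultimately show ?thesis using that by auto
qed

lemma unary_card:
  assumes "card Alph \<le> 1" "finite Alph"
  shows "card {T. is_trie Alph T \<and> card T = n} \<le> 1"
proof -
  have "\<forall>S1\<in>{T. is_trie Alph T \<and> card T = n}. \<forall>S2\<in>{T. is_trie Alph T \<and> card T = n}. S1 = S2"
  proof (intro ballI)
    fix S1 S2 assume S1: "S1 \<in> {T. is_trie Alph T \<and> card T = n}" and S2: "S2 \<in> {T. is_trie Alph T \<and> card T = n}"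
    have t: "is_trie Alph S1" "is_trie Alph S2" "card S1 = card S2" using S1 S2 by auto
    obtain u1 where u1: "u1 \<in> S1" "\<forall>x\<in>S1. length x \<le> length u1"
      using maxlen[OF trie_finite[OF t(1)]] trie_root[OF t(1)] by blast
    obtain u2 where u2: "u2 \<in> S2" "\<forall>x\<in>S2. length x \<le> length u2"
      using maxlen[OF trie_finite[OF t(2)]] trie_root[OF t(2)] by blast
    show "S1 = S2"
    proof (cases "length u1 \<le> length u2")
      case True
      then have "S1 \<subseteq> S2" using unary_sub[OF assms t(1) t(2) u2(1)] u1(2) by fastforce
      then show ?thesis using card_subset_eq[OF trie_finite[OF t(2)]] t(3) by blast
    next
      case False
      then have "S2 \<subseteq> S1" using unary_sub[OF assms t(2) t(1) u1(1)] u2(2) by fastforce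
      then show ?thesis using card_subset_eq[OF trie_finite[OF t(1)]] t(3) by metis
    qed
  qed
  then show ?thesis using card_le_Suc0_iff_eq[OF trie_set_finite[OF assms(2)]] by simp
qed

lemma small_card:
  assumes "finite Alph" "n \<ge> 1"
  shows "card {T. is_trie Alph T \<and> card T = n} \<le> 2 ^ (\<Sum>i\<le>n - 1. card Alph ^ i)"
proof -
  have "{T. is_trie Alph T \<and> card T = n} \<subseteq> Pow {xs. set xs \<subseteq> Alph \<and> length xs \<le> n - 1}"
    using trie_length_less_card trie_lists by fastforce
  then have "card {T. is_trie Alph T \<and> card T = n} \<le> card (Pow {xs. set xs \<subseteq> Alph \<and> length xs \<le> n - 1})"
    by (rule card_mono[rotated]) (use assms in \<open>simp add: finite_lists_length_le\<close>)
  also have "\<dots> = 2 ^ (\<Sum>i\<le>n - 1. card Alph ^ i)"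
    using assms by (simp add: card_Pow finite_lists_length_le card_lists_length_le)
  finally show ?thesis .
qed

lemma xlog_nonneg: "0 \<le> x \<Longrightarrow> x \<le> y \<Longrightarrow> 0 \<le> xlog x y"
  by (auto simp: xlog_def)

lemma EH_nonneg:
  assumes "is_trie Alph S" shows "0 \<le> EH Alph k S"
  unfolding EH_def
  using n_sym_le[OF trie_finite[OF assms]]
  by (intro sum_nonneg add_nonneg_nonneg xlog_nonneg) auto

lemma EH_eq:
  assumes "is_trie Alph T" "card T = n" "n > 0"
  shows "real n * trie_entropy Alph k T = EH Alph k T"
proof -
  have "trie_entropy Alph k T = EH Alph k T / real n"
    unfolding trie_entropy_def EH_def using assms(2)
    by (simp add: add_divide_distrib[symmetric] sum_divide_distrib)
  then show ?thesis using assms(3) by simp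
qed


theorem theorem2:
  fixes Alph :: "'a::linorder set" and k n :: nat
  assumes "finite Alph"
  shows "\<exists>E :: 'a list set \<Rightarrow> bool list.
           inj_on E {T. is_trie Alph T \<and> card T = n} \<and>
           (\<forall>T. is_trie Alph T \<and> card T = n \<longrightarrow>
              real (length (E T)) \<le> real n * trie_entropy Alph k T + 2
                + real ((card Alph + 1) * card Alph ^ k) * real_of_int \<lceil>log 2 (real n)\<rceil>)"
proof -
  define X where "X = {T. is_trie Alph T \<and> card T = n}"
  define D where "D = real ((card Alph + 1) * card Alph ^ k) * real_of_int \<lceil>log 2 (real n)\<rceil>"
  define B where "B T = real n * trie_entropy Alph k T + 2 + D" for T
  have fX: "finite X" using trie_set_finite[OF assms] by (simp add: X_def)
  have Dnn: "D \<ge> 0" if "n \<ge> 1"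
  proof -
    have "log 2 (real n) \<ge> 0" using that by simp
    then show ?thesis unfolding D_def by (intro mult_nonneg_nonneg) auto
  qed
  have BEH: "B T = EH Alph k T + 2 + D" if "T \<in> X" for T
  proof -
    have tT: "is_trie Alph T" "card T = n" using that by (auto simp: X_def)
    have "card T > 0" using trie_root[OF tT(1)] trie_finite[OF tT(1)] by (auto simp: card_gt_0_iff)
    then have "real n * trie_entropy Alph k T = EH Alph k T" using EH_eq[OF tT] tT(2) by simp
    then show ?thesis by (simp add: B_def)
  qed
  have cond: "\<forall>T\<in>X. B T \<ge> 0 \<and> card {S\<in>X. B S \<le> B T} \<le> 2 ^ nat \<lfloor>B T\<rfloor>"
  proof
    fix T assume T: "T \<in> X"
    have tT: "is_trie Alph T" "card T = n" using T by (auto simp: X_def)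
    have "card T > 0" using trie_root[OF tT(1)] trie_finite[OF tT(1)] by (auto simp: card_gt_0_iff)
    then have n1: "n \<ge> 1" using tT(2) by simp
    have B2: "B T \<ge> 2 + D" using BEH[OF T] EH_nonneg[OF tT(1)] by simp
    then have Bnn: "B T \<ge> 0" using Dnn[OF n1] by simp
    have fl: "real (nat \<lfloor>B T\<rfloor>) = real_of_int \<lfloor>B T\<rfloor>" using Bnn by simp
    have cs: "card {S\<in>X. B S \<le> B T} \<le> card X" by (rule card_mono[OF fX]) auto
    have "card {S\<in>X. B S \<le> B T} \<le> 2 ^ nat \<lfloor>B T\<rfloor>"
    proof (cases "card Alph \<le> 1")
      case True
      have "card X \<le> 1" using unary_card[OF True assms] by (simp add: X_def)
      moreover have "(1::nat) \<le> 2 ^ nat \<lfloor>B T\<rfloor>" by simp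
      ultimately show ?thesis using cs by linarith
    next
      case s2: False
      show ?thesis
      proof (cases "n \<le> 2")
        case True
        have "card X \<le> 2 ^ (\<Sum>i\<le>n - 1. card Alph ^ i)" using small_card[OF assms n1] by (simp add: X_def)
        moreover have "(\<Sum>i\<le>n - 1. card Alph ^ i) \<le> nat \<lfloor>B T\<rfloor>"
        proof (cases "n = 1")
          case True
          have "(2::int) \<le> \<lfloor>B T\<rfloor>" using B2 Dnn[OF n1] by (simp add: le_floor_iff)
          then have "2 \<le> nat \<lfloor>B T\<rfloor>" by (subst le_nat_iff) auto
          then show ?thesis using True by simp
        next
          case False
          then have n2: "n = 2" using \<open>n \<le> 2\<close> n1 by simp
          have "card Alph ^ k \<ge> 1" using s2 by simp
          then have "(card Alph + 1) * card Alph ^ k \<ge> (card Alph + 1) * 1" by (rule mult_le_mono2)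
          then have "real ((card Alph + 1) * card Alph ^ k) \<ge> real (card Alph + 1)" by (simp only: of_nat_le_iff mult_1_right)
          then have "D \<ge> real (card Alph) + 1" using n2 by (simp add: D_def)
          then have "real (card Alph + 3) \<le> B T" using B2 by simp
          then have "int (card Alph + 3) \<le> \<lfloor>B T\<rfloor>" by (simp add: le_floor_iff)
          then have "card Alph + 3 \<le> nat \<lfloor>B T\<rfloor>" by (subst le_nat_iff) (use Bnn in auto)
          then show ?thesis using n2 by simp
        qed
        then have "(2::nat) ^ (\<Sum>i\<le>n - 1. card Alph ^ i) \<le> 2 ^ nat \<lfloor>B T\<rfloor>" by (rule power_increasing) simp
        ultimately show ?thesis using cs by linarith
      next
        case False
        then have n3: "n \<ge> 3" by simp
        have eqs: "{S\<in>X. B S \<le> B T} = {S\<in>X. EH Alph k S \<le> EH Alph k T}"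
        proof (intro set_eqI)
          fix S show "S \<in> {S\<in>X. B S \<le> B T} \<longleftrightarrow> S \<in> {S\<in>X. EH Alph k S \<le> EH Alph k T}"
            using BEH[OF T] BEH[of S] by auto
        qed
        have "real (card {S\<in>X. B S \<le> B T}) \<le> real (card (phi Alph k ` X)) * 2 powr EH Alph k T"
          unfolding eqs using count_le[OF assms, of n k "EH Alph k T"] by (simp only: X_def)
        also have "\<dots> \<le> 2 powr D * 2 powr EH Alph k T"
        proof (rule mult_right_mono)
          have "card (phi Alph k ` X) \<le> 2 ^ (\<Sum>i\<le>k. card Alph ^ i) * n ^ (card Alph ^ k * card Alph)"
            unfolding X_def by (rule phi_card[OF assms])
          then have "real (card (phi Alph k ` X)) \<le> real (2 ^ (\<Sum>i\<le>k. card Alph ^ i) * n ^ (card Alph ^ k * card Alph))"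
            by (simp only: of_nat_le_iff)
          also have "\<dots> \<le> 2 powr D" unfolding D_def by (rule main_arith) (use s2 n3 in auto)
          finally show "real (card (phi Alph k ` X)) \<le> 2 powr D" .
        qed simp
        also have "\<dots> = 2 powr (B T - 2)" using BEH[OF T] by (simp add: powr_add[symmetric] add.commute)
        also have "\<dots> \<le> 2 powr real (nat \<lfloor>B T\<rfloor>)" unfolding fl by (intro powr_mono) linarith+
        also have "\<dots> = 2 ^ nat \<lfloor>B T\<rfloor>" by (simp add: powr_realpow)
        finally show ?thesis by (metis of_nat_le_iff of_nat_numeral of_nat_power)
      qed
    qed
    then show "B T \<ge> 0 \<and> card {S\<in>X. B S \<le> B T} \<le> 2 ^ nat \<lfloor>B T\<rfloor>" using Bnn by simp
  qed
  obtain E :: "'a list set \<Rightarrow> bool list" where E: "inj_on E X" "\<forall>T\<in>X. real (length (E T)) \<le> B T"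
    using code_exists[OF fX cond] by blast
  show ?thesis
  proof (intro exI conjI)
    show "inj_on E {T. is_trie Alph T \<and> card T = n}" using E(1) by (simp add: X_def)
    show "\<forall>T. is_trie Alph T \<and> card T = n \<longrightarrow>
              real (length (E T)) \<le> real n * trie_entropy Alph k T + 2
                + real ((card Alph + 1) * card Alph ^ k) * real_of_int \<lceil>log 2 (real n)\<rceil>"
    proof (intro allI impI)
      fix T assume "is_trie Alph T \<and> card T = n"
      then have "T \<in> X" by (simp add: X_def)
      then show "real (length (E T)) \<le> real n * trie_entropy Alph k T + 2
                + real ((card Alph + 1) * card Alph ^ k) * real_of_int \<lceil>log 2 (real n)\<rceil>"
        using E(2) unfolding B_def D_def by blast
    qed
  qed
qed

end
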